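(* Let $(a,b)\in\mathbb{C}^2$ and $X=\{u_1x=v_1y,\ u_2z=v_2t,\ w^2+xy+zt=a(xt+yz)+b(xz+yt)\}\subset\mathbb{P}^1\times\mathbb{P}^1\times\mathbb{P}^4$, and let $G\subset\mathrm{Aut}(X)$ be the group generated by $\tau_1,\tau_2,\tau_3$. Then: (1) if $X$ is smooth, then $X$ has no $G$-fixed points; (2) if $X$ has exactly one singular point, then this singular point is the only $G$-fixed point in $X$.
   Context: Coordinates are $([u_1:v_1],[u_2:v_2],[x:y:z:t:w])$. The involutions are $\tau_1\colon([u_1:v_1],[u_2:v_2],[x:y:z:t:w])\mapsto([v_1:u_1],[v_2:u_2],[y:x:t:z:w])$, $\tau_2\colon\mapsto([u_2:v_2],[u_1:v_1],[z:t:x:y:w])$, $\tau_3\colon\mapsto([u_1:v_1],[u_2:v_2],[x:y:z:t:-w])$; $G\cong\boldsymbol{\mu}_2^3$. *)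

theory Defs
  imports "HOL-Analysis.Analysis"
begin

text \<open>Homogeneous coordinates of a point of P^1 x P^1 x P^4 are stored in a function
  p :: nat => complex, using the indices
  0 = u1, 1 = v1, 2 = u2, 3 = v2, 4 = x, 5 = y, 6 = z, 7 = t, 8 = w
  (values at indices >= 9 are irrelevant).\<close>

type_synonym hcoord = "nat \<Rightarrow> complex"

definition valid_pt :: "hcoord \<Rightarrow> bool" where
  "valid_pt p \<longleftrightarrow> (\<exists>i\<in>{0,1}. p i \<noteq> 0) \<and> (\<exists>i\<in>{2,3}. p i \<noteq> 0)
      \<and> (\<exists>i\<in>{4..8}. p i \<noteq> 0)"

definition proj_eq :: "hcoord \<Rightarrow> hcoord \<Rightarrow> bool" where
  "proj_eq p q \<longleftrightarrow> (\<exists>c1 c2 c3. c1 \<noteq> 0 \<and> c2 \<noteq> 0 \<and> c3 \<noteq> 0 \<and>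
      (\<forall>i\<in>{0,1}. q i = c1 * p i) \<and> (\<forall>i\<in>{2,3}. q i = c2 * p i) \<and>
      (\<forall>i\<in>{4..8}. q i = c3 * p i))"

definition F1 :: "hcoord \<Rightarrow> complex" where
  "F1 p = p 0 * p 4 - p 1 * p 5"

definition F2 :: "hcoord \<Rightarrow> complex" where
  "F2 p = p 2 * p 6 - p 3 * p 7"

definition F3 :: "complex \<Rightarrow> complex \<Rightarrow> hcoord \<Rightarrow> complex" where
  "F3 a b p = (p 8)^2 + p 4 * p 5 + p 6 * p 7
      - a * (p 4 * p 7 + p 5 * p 6) - b * (p 4 * p 6 + p 5 * p 7)"

definition onX :: "complex \<Rightarrow> complex \<Rightarrow> hcoord \<Rightarrow> bool" where
  "onX a b p \<longleftrightarrow> valid_pt p \<and> F1 p = 0 \<and> F2 p = 0 \<and> F3 a b p = 0"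

definition pderiv_at :: "(hcoord \<Rightarrow> complex) \<Rightarrow> hcoord \<Rightarrow> nat \<Rightarrow> complex" where
  "pderiv_at F p i = deriv (\<lambda>s. F (p(i := s))) (p i)"

text \<open>Jacobian criterion: p is a singular point of X iff the 3 x 9 Jacobian matrix of
  (F1, F2, F3) with respect to all homogeneous coordinates has rank < 3, i.e. its
  three rows are linearly dependent.\<close>
definition singX :: "complex \<Rightarrow> complex \<Rightarrow> hcoord \<Rightarrow> bool" where
  "singX a b p \<longleftrightarrow> onX a b p \<and>
     (\<exists>c1 c2 c3. (c1, c2, c3) \<noteq> (0, 0, 0) \<and>
        (\<forall>i<9. c1 * pderiv_at F1 p i + c2 * pderiv_at F2 p i + c3 * pderiv_at (F3 a b) p i = 0))"

definition smoothX :: "complex \<Rightarrow> complex \<Rightarrow> bool" where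
  "smoothX a b \<longleftrightarrow> (\<forall>p. \<not> singX a b p)"

definition tau1 :: "hcoord \<Rightarrow> hcoord" where
  "tau1 p = p(0 := p 1, 1 := p 0, 2 := p 3, 3 := p 2, 4 := p 5, 5 := p 4, 6 := p 7, 7 := p 6)"

definition tau2 :: "hcoord \<Rightarrow> hcoord" where
  "tau2 p = p(0 := p 2, 1 := p 3, 2 := p 0, 3 := p 1, 4 := p 6, 5 := p 7, 6 := p 4, 7 := p 5)"

definition tau3 :: "hcoord \<Rightarrow> hcoord" where
  "tau3 p = p(8 := - p 8)"

text \<open>The group G generated by tau1, tau2, tau3 (as maps on coordinates; each is an
  involution, so the monoid generated is the group generated).\<close>
inductive_set Ggrp :: "(hcoord \<Rightarrow> hcoord) set" where
  G_id: "id \<in> Ggrp"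
| G_1: "g \<in> Ggrp \<Longrightarrow> tau1 \<circ> g \<in> Ggrp"
| G_2: "g \<in> Ggrp \<Longrightarrow> tau2 \<circ> g \<in> Ggrp"
| G_3: "g \<in> Ggrp \<Longrightarrow> tau3 \<circ> g \<in> Ggrp"

definition G_fixed_pt :: "complex \<Rightarrow> complex \<Rightarrow> hcoord \<Rightarrow> bool" where
  "G_fixed_pt a b p \<longleftrightarrow> onX a b p \<and> (\<forall>g\<in>Ggrp. proj_eq p (g p))"

end

theory Submission imports Defs begin


lemma I48: "{4..8::nat} = {4,5,6,7,8}" by auto
lemma A9: "(\<forall>i<(9::nat). P i) \<longleftrightarrow> P 0 \<and> P 1 \<and> P 2 \<and> P 3 \<and> P 4 \<and> P 5 \<and> P 6 \<and> P 7 \<and> P 8"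
proof -
  have "(\<forall>i<(9::nat). P i) = (\<forall>i\<in>{..<9}. P i)" by auto
  also have "\<dots> = (P 8 \<and> P 7 \<and> P 6 \<and> P 5 \<and> P 4 \<and> P 3 \<and> P 2 \<and> P 1 \<and> P 0)"
    by (simp add: lessThan_nat_numeral lessThan_Suc)
  finally show ?thesis by blast
qed


lemma pd_F1_0: "pderiv_at F1 p 0 = p 4"
  unfolding pderiv_at_def
  by (rule DERIV_imp_deriv, simp add: F1_def, (auto intro!: derivative_eq_intros simp: algebra_simps)?)

lemma pd_F1_1: "pderiv_at F1 p 1 = - p 5"
  unfolding pderiv_at_def
  by (rule DERIV_imp_deriv, simp add: F1_def, (auto intro!: derivative_eq_intros simp: algebra_simps)?)

lemma pd_F1_2: "pderiv_at F1 p 2 = 0"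
  unfolding pderiv_at_def
  by (rule DERIV_imp_deriv, simp add: F1_def, (auto intro!: derivative_eq_intros simp: algebra_simps)?)

lemma pd_F1_3: "pderiv_at F1 p 3 = 0"
  unfolding pderiv_at_def
  by (rule DERIV_imp_deriv, simp add: F1_def, (auto intro!: derivative_eq_intros simp: algebra_simps)?)

lemma pd_F1_4: "pderiv_at F1 p 4 = p 0"
  unfolding pderiv_at_def
  by (rule DERIV_imp_deriv, simp add: F1_def, (auto intro!: derivative_eq_intros simp: algebra_simps)?)

lemma pd_F1_5: "pderiv_at F1 p 5 = - p 1"
  unfolding pderiv_at_def
  by (rule DERIV_imp_deriv, simp add: F1_def, (auto intro!: derivative_eq_intros simp: algebra_simps)?)

lemma pd_F1_6: "pderiv_at F1 p 6 = 0"
  unfolding pderiv_at_def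
  by (rule DERIV_imp_deriv, simp add: F1_def, (auto intro!: derivative_eq_intros simp: algebra_simps)?)

lemma pd_F1_7: "pderiv_at F1 p 7 = 0"
  unfolding pderiv_at_def
  by (rule DERIV_imp_deriv, simp add: F1_def, (auto intro!: derivative_eq_intros simp: algebra_simps)?)

lemma pd_F1_8: "pderiv_at F1 p 8 = 0"
  unfolding pderiv_at_def
  by (rule DERIV_imp_deriv, simp add: F1_def, (auto intro!: derivative_eq_intros simp: algebra_simps)?)

lemma pd_F2_0: "pderiv_at F2 p 0 = 0"
  unfolding pderiv_at_def
  by (rule DERIV_imp_deriv, simp add: F2_def, (auto intro!: derivative_eq_intros simp: algebra_simps)?)

lemma pd_F2_1: "pderiv_at F2 p 1 = 0"
  unfolding pderiv_at_def
  by (rule DERIV_imp_deriv, simp add: F2_def, (auto intro!: derivative_eq_intros simp: algebra_simps)?)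

lemma pd_F2_2: "pderiv_at F2 p 2 = p 6"
  unfolding pderiv_at_def
  by (rule DERIV_imp_deriv, simp add: F2_def, (auto intro!: derivative_eq_intros simp: algebra_simps)?)

lemma pd_F2_3: "pderiv_at F2 p 3 = - p 7"
  unfolding pderiv_at_def
  by (rule DERIV_imp_deriv, simp add: F2_def, (auto intro!: derivative_eq_intros simp: algebra_simps)?)

lemma pd_F2_4: "pderiv_at F2 p 4 = 0"
  unfolding pderiv_at_def
  by (rule DERIV_imp_deriv, simp add: F2_def, (auto intro!: derivative_eq_intros simp: algebra_simps)?)

lemma pd_F2_5: "pderiv_at F2 p 5 = 0"
  unfolding pderiv_at_def
  by (rule DERIV_imp_deriv, simp add: F2_def, (auto intro!: derivative_eq_intros simp: algebra_simps)?)

lemma pd_F2_6: "pderiv_at F2 p 6 = p 2"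
  unfolding pderiv_at_def
  by (rule DERIV_imp_deriv, simp add: F2_def, (auto intro!: derivative_eq_intros simp: algebra_simps)?)

lemma pd_F2_7: "pderiv_at F2 p 7 = - p 3"
  unfolding pderiv_at_def
  by (rule DERIV_imp_deriv, simp add: F2_def, (auto intro!: derivative_eq_intros simp: algebra_simps)?)

lemma pd_F2_8: "pderiv_at F2 p 8 = 0"
  unfolding pderiv_at_def
  by (rule DERIV_imp_deriv, simp add: F2_def, (auto intro!: derivative_eq_intros simp: algebra_simps)?)

lemma pd_F3_0: "pderiv_at (F3 a b) p 0 = 0"
  unfolding pderiv_at_def
  by (rule DERIV_imp_deriv, simp add: F3_def, (auto intro!: derivative_eq_intros simp: algebra_simps)?)

lemma pd_F3_1: "pderiv_at (F3 a b) p 1 = 0"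
  unfolding pderiv_at_def
  by (rule DERIV_imp_deriv, simp add: F3_def, (auto intro!: derivative_eq_intros simp: algebra_simps)?)

lemma pd_F3_2: "pderiv_at (F3 a b) p 2 = 0"
  unfolding pderiv_at_def
  by (rule DERIV_imp_deriv, simp add: F3_def, (auto intro!: derivative_eq_intros simp: algebra_simps)?)

lemma pd_F3_3: "pderiv_at (F3 a b) p 3 = 0"
  unfolding pderiv_at_def
  by (rule DERIV_imp_deriv, simp add: F3_def, (auto intro!: derivative_eq_intros simp: algebra_simps)?)

lemma pd_F3_4: "pderiv_at (F3 a b) p 4 = p 5 - a * p 7 - b * p 6"
  unfolding pderiv_at_def
  by (rule DERIV_imp_deriv, simp add: F3_def, (auto intro!: derivative_eq_intros simp: algebra_simps)?)

lemma pd_F3_5: "pderiv_at (F3 a b) p 5 = p 4 - a * p 6 - b * p 7"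
  unfolding pderiv_at_def
  by (rule DERIV_imp_deriv, simp add: F3_def, (auto intro!: derivative_eq_intros simp: algebra_simps)?)

lemma pd_F3_6: "pderiv_at (F3 a b) p 6 = p 7 - a * p 5 - b * p 4"
  unfolding pderiv_at_def
  by (rule DERIV_imp_deriv, simp add: F3_def, (auto intro!: derivative_eq_intros simp: algebra_simps)?)

lemma pd_F3_7: "pderiv_at (F3 a b) p 7 = p 6 - a * p 4 - b * p 5"
  unfolding pderiv_at_def
  by (rule DERIV_imp_deriv, simp add: F3_def, (auto intro!: derivative_eq_intros simp: algebra_simps)?)

lemma pd_F3_8: "pderiv_at (F3 a b) p 8 = 2 * p 8"
  unfolding pderiv_at_def
  by (rule DERIV_imp_deriv, simp add: F3_def, (auto intro!: derivative_eq_intros simp: algebra_simps)?)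

lemmas pd_F1 = pd_F1_0 pd_F1_1 pd_F1_2 pd_F1_3 pd_F1_4 pd_F1_5 pd_F1_6 pd_F1_7 pd_F1_8
lemmas pd_F2 = pd_F2_0 pd_F2_1 pd_F2_2 pd_F2_3 pd_F2_4 pd_F2_5 pd_F2_6 pd_F2_7 pd_F2_8
lemmas pd_F3 = pd_F3_0 pd_F3_1 pd_F3_2 pd_F3_3 pd_F3_4 pd_F3_5 pd_F3_6 pd_F3_7 pd_F3_8

lemma singX_alt: "singX a b p \<longleftrightarrow> onX a b p \<and>
  (\<exists>c1 c2 c3. (c1, c2, c3) \<noteq> (0, 0, 0) \<and>
     c1 * p 4 = 0 \<and> - c1 * p 5 = 0 \<and> c2 * p 6 = 0 \<and> - c2 * p 7 = 0 \<and>
     c1 * p 0 + c3 * (p 5 - a * p 7 - b * p 6) = 0 \<and>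
     - c1 * p 1 + c3 * (p 4 - a * p 6 - b * p 7) = 0 \<and>
     c2 * p 2 + c3 * (p 7 - a * p 5 - b * p 4) = 0 \<and>
     - c2 * p 3 + c3 * (p 6 - a * p 4 - b * p 5) = 0 \<and>
     c3 * (2 * p 8) = 0)"
  unfolding singX_def A9 pd_F1 pd_F2 pd_F3 by simp

lemma proj_eq_alt: "proj_eq p q \<longleftrightarrow> (\<exists>c1 c2 c3. c1 \<noteq> 0 \<and> c2 \<noteq> 0 \<and> c3 \<noteq> 0 \<and>
   q 0 = c1 * p 0 \<and> q 1 = c1 * p 1 \<and> q 2 = c2 * p 2 \<and> q 3 = c2 * p 3 \<and>
   q 4 = c3 * p 4 \<and> q 5 = c3 * p 5 \<and> q 6 = c3 * p 6 \<and> q 7 = c3 * p 7 \<and> q 8 = c3 * p 8)"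
  unfolding proj_eq_def I48 by simp

lemma valid_alt: "valid_pt p \<longleftrightarrow> (p 0 \<noteq> 0 \<or> p 1 \<noteq> 0) \<and> (p 2 \<noteq> 0 \<or> p 3 \<noteq> 0) \<and>
  (p 4 \<noteq> 0 \<or> p 5 \<noteq> 0 \<or> p 6 \<noteq> 0 \<or> p 7 \<noteq> 0 \<or> p 8 \<noteq> 0)"
  unfolding valid_pt_def I48 by auto

lemma proj_refl: "proj_eq p p"
  unfolding proj_eq_alt by (rule exI[of _ 1], rule exI[of _ 1], rule exI[of _ 1]) simp

lemma proj_sym: assumes "proj_eq p q" shows "proj_eq q p"
proof -
  from assms obtain c1 c2 c3 where h: "c1 \<noteq> 0 \<and> c2 \<noteq> 0 \<and> c3 \<noteq> 0 \<and>
   q 0 = c1 * p 0 \<and> q 1 = c1 * p 1 \<and> q 2 = c2 * p 2 \<and> q 3 = c2 * p 3 \<and>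
   q 4 = c3 * p 4 \<and> q 5 = c3 * p 5 \<and> q 6 = c3 * p 6 \<and> q 7 = c3 * p 7 \<and> q 8 = c3 * p 8"
    unfolding proj_eq_alt by blast
  show ?thesis unfolding proj_eq_alt
    by (rule exI[of _ "inverse c1"], rule exI[of _ "inverse c2"], rule exI[of _ "inverse c3"])
       (use h in \<open>simp add: mult.assoc[symmetric] left_inverse\<close>)
qed

lemma proj_trans: assumes "proj_eq p q" "proj_eq q r" shows "proj_eq p r"
proof -
  from assms(1) obtain c1 c2 c3 where h: "c1 \<noteq> 0 \<and> c2 \<noteq> 0 \<and> c3 \<noteq> 0 \<and>
   q 0 = c1 * p 0 \<and> q 1 = c1 * p 1 \<and> q 2 = c2 * p 2 \<and> q 3 = c2 * p 3 \<and>
   q 4 = c3 * p 4 \<and> q 5 = c3 * p 5 \<and> q 6 = c3 * p 6 \<and> q 7 = c3 * p 7 \<and> q 8 = c3 * p 8"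
    unfolding proj_eq_alt by blast
  from assms(2) obtain d1 d2 d3 where k: "d1 \<noteq> 0 \<and> d2 \<noteq> 0 \<and> d3 \<noteq> 0 \<and>
   r 0 = d1 * q 0 \<and> r 1 = d1 * q 1 \<and> r 2 = d2 * q 2 \<and> r 3 = d2 * q 3 \<and>
   r 4 = d3 * q 4 \<and> r 5 = d3 * q 5 \<and> r 6 = d3 * q 6 \<and> r 7 = d3 * q 7 \<and> r 8 = d3 * q 8"
    unfolding proj_eq_alt by blast
  show ?thesis unfolding proj_eq_alt
    by (rule exI[of _ "d1*c1"], rule exI[of _ "d2*c2"], rule exI[of _ "d3*c3"])
       (use h k in \<open>simp add: mult.assoc\<close>)
qed

lemma tau_simps:
  "tau1 p 0 = p 1" "tau1 p 1 = p 0" "tau1 p 2 = p 3" "tau1 p 3 = p 2" "tau1 p 4 = p 5"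
  "tau1 p 5 = p 4" "tau1 p 6 = p 7" "tau1 p 7 = p 6" "tau1 p 8 = p 8"
  "tau2 p 0 = p 2" "tau2 p 1 = p 3" "tau2 p 2 = p 0" "tau2 p 3 = p 1" "tau2 p 4 = p 6"
  "tau2 p 5 = p 7" "tau2 p 6 = p 4" "tau2 p 7 = p 5" "tau2 p 8 = p 8"
  "tau3 p 0 = p 0" "tau3 p 1 = p 1" "tau3 p 2 = p 2" "tau3 p 3 = p 3" "tau3 p 4 = p 4"
  "tau3 p 5 = p 5" "tau3 p 6 = p 6" "tau3 p 7 = p 7" "tau3 p 8 = - p 8"
  by (simp_all add: tau1_def tau2_def tau3_def)

lemma tau_simps1: "tau1 p (Suc 0) = p 0" "tau2 p (Suc 0) = p 3" "tau3 p (Suc 0) = p 1"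
  by (simp_all add: tau1_def tau2_def tau3_def)

lemmas tauS = tau_simps tau_simps1

lemma G_resp: assumes "g \<in> Ggrp" "proj_eq p q" shows "proj_eq (g p) (g q)"
  using assms(1)
proof induction
  case G_id then show ?case using assms(2) by simp
next
  case (G_1 g)
  then obtain c1 c2 c3 where h: "c1 \<noteq> 0 \<and> c2 \<noteq> 0 \<and> c3 \<noteq> 0 \<and>
   g q 0 = c1 * g p 0 \<and> g q 1 = c1 * g p 1 \<and> g q 2 = c2 * g p 2 \<and> g q 3 = c2 * g p 3 \<and>
   g q 4 = c3 * g p 4 \<and> g q 5 = c3 * g p 5 \<and> g q 6 = c3 * g p 6 \<and> g q 7 = c3 * g p 7 \<and> g q 8 = c3 * g p 8"
    unfolding proj_eq_alt by blast
  show ?case unfolding proj_eq_alt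
    by (rule exI[of _ c1], rule exI[of _ c2], rule exI[of _ c3]) (use h in \<open>simp add: tauS\<close>)
next
  case (G_2 g)
  then obtain c1 c2 c3 where h: "c1 \<noteq> 0 \<and> c2 \<noteq> 0 \<and> c3 \<noteq> 0 \<and>
   g q 0 = c1 * g p 0 \<and> g q 1 = c1 * g p 1 \<and> g q 2 = c2 * g p 2 \<and> g q 3 = c2 * g p 3 \<and>
   g q 4 = c3 * g p 4 \<and> g q 5 = c3 * g p 5 \<and> g q 6 = c3 * g p 6 \<and> g q 7 = c3 * g p 7 \<and> g q 8 = c3 * g p 8"
    unfolding proj_eq_alt by blast
  show ?case unfolding proj_eq_alt
    by (rule exI[of _ c2], rule exI[of _ c1], rule exI[of _ c3]) (use h in \<open>simp add: tauS\<close>)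
next
  case (G_3 g)
  then obtain c1 c2 c3 where h: "c1 \<noteq> 0 \<and> c2 \<noteq> 0 \<and> c3 \<noteq> 0 \<and>
   g q 0 = c1 * g p 0 \<and> g q 1 = c1 * g p 1 \<and> g q 2 = c2 * g p 2 \<and> g q 3 = c2 * g p 3 \<and>
   g q 4 = c3 * g p 4 \<and> g q 5 = c3 * g p 5 \<and> g q 6 = c3 * g p 6 \<and> g q 7 = c3 * g p 7 \<and> g q 8 = c3 * g p 8"
    unfolding proj_eq_alt by blast
  show ?case unfolding proj_eq_alt
    by (rule exI[of _ c1], rule exI[of _ c2], rule exI[of _ c3]) (use h in \<open>simp add: tauS\<close>)
qed


lemma onX_proj: assumes "proj_eq p q" "onX a b p" shows "onX a b q"
proof -
  from assms(1) obtain c1 c2 c3 where h: "c1 \<noteq> 0 \<and> c2 \<noteq> 0 \<and> c3 \<noteq> 0 \<and>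
   q 0 = c1 * p 0 \<and> q 1 = c1 * p 1 \<and> q 2 = c2 * p 2 \<and> q 3 = c2 * p 3 \<and>
   q 4 = c3 * p 4 \<and> q 5 = c3 * p 5 \<and> q 6 = c3 * p 6 \<and> q 7 = c3 * p 7 \<and> q 8 = c3 * p 8"
    unfolding proj_eq_alt by blast
  have "F1 q = c1 * c3 * F1 p" "F2 q = c2 * c3 * F2 p" "F3 a b q = c3^2 * F3 a b p"
    using h unfolding F1_def F2_def F3_def by (simp_all add: algebra_simps power2_eq_square)
  then show ?thesis using assms(2) h unfolding onX_def valid_alt by auto
qed

lemma onX_tau:
  "onX a b p \<Longrightarrow> onX a b (tau1 p)" "onX a b p \<Longrightarrow> onX a b (tau2 p)" "onX a b p \<Longrightarrow> onX a b (tau3 p)"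
  unfolding onX_def valid_alt F1_def F2_def F3_def tau_simps
  by (auto simp: algebra_simps)

lemma sing_tau1: assumes "singX a b p" shows "singX a b (tau1 p)"
proof -
  from assms obtain c1 c2 c3 where h: "(c1, c2, c3) \<noteq> (0, 0, 0) \<and>
     c1 * p 4 = 0 \<and> - c1 * p 5 = 0 \<and> c2 * p 6 = 0 \<and> - c2 * p 7 = 0 \<and>
     c1 * p 0 + c3 * (p 5 - a * p 7 - b * p 6) = 0 \<and>
     - c1 * p 1 + c3 * (p 4 - a * p 6 - b * p 7) = 0 \<and>
     c2 * p 2 + c3 * (p 7 - a * p 5 - b * p 4) = 0 \<and>
     - c2 * p 3 + c3 * (p 6 - a * p 4 - b * p 5) = 0 \<and>
     c3 * (2 * p 8) = 0" and o: "onX a b p" unfolding singX_alt by blast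
  show ?thesis unfolding singX_alt
    apply (rule conjI, rule onX_tau(1)[OF o])
    by (rule exI[of _ "-c1"], rule exI[of _ "-c2"], rule exI[of _ c3])
      (use h in \<open>simp add: tauS\<close>)
qed

lemma sing_tau2: assumes "singX a b p" shows "singX a b (tau2 p)"
proof -
  from assms obtain c1 c2 c3 where h: "(c1, c2, c3) \<noteq> (0, 0, 0) \<and>
     c1 * p 4 = 0 \<and> - c1 * p 5 = 0 \<and> c2 * p 6 = 0 \<and> - c2 * p 7 = 0 \<and>
     c1 * p 0 + c3 * (p 5 - a * p 7 - b * p 6) = 0 \<and>
     - c1 * p 1 + c3 * (p 4 - a * p 6 - b * p 7) = 0 \<and>
     c2 * p 2 + c3 * (p 7 - a * p 5 - b * p 4) = 0 \<and>
     - c2 * p 3 + c3 * (p 6 - a * p 4 - b * p 5) = 0 \<and>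
     c3 * (2 * p 8) = 0" and o: "onX a b p" unfolding singX_alt by blast
  show ?thesis unfolding singX_alt
    apply (rule conjI, rule onX_tau(2)[OF o])
    by (rule exI[of _ "c2"], rule exI[of _ "c1"], rule exI[of _ c3])
      (use h in \<open>simp add: tauS\<close>)
qed

lemma sing_tau3: assumes "singX a b p" shows "singX a b (tau3 p)"
proof -
  from assms obtain c1 c2 c3 where h: "(c1, c2, c3) \<noteq> (0, 0, 0) \<and>
     c1 * p 4 = 0 \<and> - c1 * p 5 = 0 \<and> c2 * p 6 = 0 \<and> - c2 * p 7 = 0 \<and>
     c1 * p 0 + c3 * (p 5 - a * p 7 - b * p 6) = 0 \<and>
     - c1 * p 1 + c3 * (p 4 - a * p 6 - b * p 7) = 0 \<and>
     c2 * p 2 + c3 * (p 7 - a * p 5 - b * p 4) = 0 \<and>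
     - c2 * p 3 + c3 * (p 6 - a * p 4 - b * p 5) = 0 \<and>
     c3 * (2 * p 8) = 0" and o: "onX a b p" unfolding singX_alt by blast
  show ?thesis unfolding singX_alt
    apply (rule conjI, rule onX_tau(3)[OF o])
    by (rule exI[of _ "c1"], rule exI[of _ "c2"], rule exI[of _ c3])
      (use h in \<open>simp add: tauS\<close>)
qed

lemma sing_G: assumes "g \<in> Ggrp" "singX a b p" shows "singX a b (g p)"
  using assms(1) by induction (auto simp: assms(2) sing_tau1 sing_tau2 sing_tau3)



lemma tau_in: "tau1 \<in> Ggrp" "tau2 \<in> Ggrp" "tau3 \<in> Ggrp"
  using G_1[OF G_id] G_2[OF G_id] G_3[OF G_id] by simp_all

lemma fixed_sing: assumes "G_fixed_pt a b p" shows "singX a b p"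
proof -
  have o: "onX a b p" and e1: "proj_eq p (tau1 p)" and e2: "proj_eq p (tau2 p)"
    and e3: "proj_eq p (tau3 p)"
    using assms tau_in unfolding G_fixed_pt_def by auto
  have v: "p 4 \<noteq> 0 \<or> p 5 \<noteq> 0 \<or> p 6 \<noteq> 0 \<or> p 7 \<noteq> 0 \<or> p 8 \<noteq> 0"
    and f3: "F3 a b p = 0" using o unfolding onX_def valid_alt by auto
  from e3 obtain c where c: "p 4 = c * p 4" "p 5 = c * p 5" "p 6 = c * p 6" "p 7 = c * p 7"
    "- p 8 = c * p 8" unfolding proj_eq_alt tauS by blast
  have p8: "p 8 = 0"
  proof (rule ccontr)
    assume h: "p 8 \<noteq> 0"
    have "(c + 1) * p 8 = c * p 8 + p 8" by (simp add: algebra_simps)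
    also have "\<dots> = 0" by (simp add: c(5)[symmetric])
    finally have "(c + 1) * p 8 = 0" .
    then have "c = -1" using h by (simp add: add_eq_0_iff2)
    then have "p 4 = 0" "p 5 = 0" "p 6 = 0" "p 7 = 0" using c(1-4) by simp_all
    then have "(p 8)^2 = 0" using f3 unfolding F3_def by simp
    then show False using h by simp
  qed
  from e1 obtain d where d: "p 5 = d * p 4" "p 4 = d * p 5" "p 7 = d * p 6" "p 6 = d * p 7"
    unfolding proj_eq_alt tauS by blast
  from e2 obtain f where f: "p 6 = f * p 4" "p 7 = f * p 5" "p 4 = f * p 6" "p 5 = f * p 7"
    unfolding proj_eq_alt tauS by blast
  define x where "x = p 4"
  have p5: "p 5 = d * x" using d(1) unfolding x_def .
  have p6: "p 6 = f * x" using f(1) unfolding x_def .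
  have p7: "p 7 = f * d * x" using f(2) unfolding p5 by (simp add: mult.assoc)
  have x0: "x \<noteq> 0" using v p5 p6 p7 p8 x_def by auto
  have dd: "d^2 = 1"
  proof -
    have "x = d * p 5" using d(2) unfolding x_def .
    then have "x = d * d * x" unfolding p5 by (simp add: mult.assoc)
    then have "x * (d^2 - 1) = 0" by (simp add: algebra_simps power2_eq_square)
    then show ?thesis using x0 by simp
  qed
  have ff: "f^2 = 1"
  proof -
    have "x = f * p 6" using f(3) unfolding x_def .
    then have "x = f * f * x" unfolding p6 by (simp add: mult.assoc)
    then have "x * (f^2 - 1) = 0" by (simp add: algebra_simps power2_eq_square)
    then show ?thesis using x0 by simp
  qed
  have ds: "d = 1 \<or> d = -1" using dd by (simp add: power2_eq_1_iff)
  have fs: "f = 1 \<or> f = -1" using ff by (simp add: power2_eq_1_iff)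
  define K where "K = d - a * d * f - b * f"
  have "F3 a b p = x^2 * (2 * K)"
  proof -
    have "F3 a b p = x^2 * (d + d * f^2 - 2 * a * d * f - b * f - b * d^2 * f)"
      unfolding F3_def p5 p6 p7 p8 x_def[symmetric] by (simp add: algebra_simps power2_eq_square)
    also have "\<dots> = x^2 * (2 * K)" unfolding K_def dd ff by (simp add: algebra_simps)
    finally show ?thesis .
  qed
  then have K0: "K = 0" using f3 x0 by simp
  have g4: "p 5 - a * p 7 - b * p 6 = x * K" unfolding p5 p6 p7 K_def by (simp add: algebra_simps)
  have g5: "p 4 - a * p 6 - b * p 7 = x * d * K" unfolding p5 p6 p7 K_def x_def[symmetric]
    using ds fs by (elim disjE) (simp_all add: algebra_simps)
  have g6: "p 7 - a * p 5 - b * p 4 = x * f * K" unfolding p5 p6 p7 K_def x_def[symmetric]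
    using ds fs by (elim disjE) (simp_all add: algebra_simps)
  have g7: "p 6 - a * p 4 - b * p 5 = x * d * f * K" unfolding p5 p6 p7 K_def x_def[symmetric]
    using ds fs by (elim disjE) (simp_all add: algebra_simps)
  show ?thesis unfolding singX_alt
    apply (rule conjI[OF o])
    apply (rule exI[of _ 0], rule exI[of _ 0], rule exI[of _ 1])
    using g4 g5 g6 g7 K0 p8 by simp
qed

theorem lemma4p1:
  fixes a b :: complex
  shows "(smoothX a b \<longrightarrow> \<not> (\<exists>p. G_fixed_pt a b p))
     \<and> ((\<exists>s. singX a b s \<and> (\<forall>q. singX a b q \<longrightarrow> proj_eq s q))
         \<longrightarrow> (\<forall>s. singX a b s \<longrightarrow> (\<forall>q. G_fixed_pt a b q \<longleftrightarrow> proj_eq s q)))"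
proof (intro conjI impI allI)
  show "smoothX a b \<Longrightarrow> \<not> (\<exists>p. G_fixed_pt a b p)"
    using fixed_sing unfolding smoothX_def by blast
next
  fix s q
  assume "\<exists>s. singX a b s \<and> (\<forall>q. singX a b q \<longrightarrow> proj_eq s q)"
  then obtain s0 where s0: "singX a b s0" and u: "\<And>q. singX a b q \<Longrightarrow> proj_eq s0 q" by blast
  assume s: "singX a b s"
  have ss: "proj_eq s0 s" using u s by blast
  show "G_fixed_pt a b q \<longleftrightarrow> proj_eq s q"
  proof
    assume "G_fixed_pt a b q"
    then have "proj_eq s0 q" using u fixed_sing by blast
    then show "proj_eq s q" by (rule proj_trans[OF proj_sym[OF ss]])
  next
    assume sq: "proj_eq s q"
    have "onX a b q" using onX_proj[OF sq] s unfolding singX_def by blast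
    moreover have "proj_eq q (g q)" if g: "g \<in> Ggrp" for g
    proof -
      have "proj_eq s0 (g s)" using u sing_G[OF g s] by blast
      then have gs: "proj_eq s (g s)" by (rule proj_trans[OF proj_sym[OF ss]])
      have "proj_eq (g s) (g q)" using G_resp[OF g sq] .
      then show ?thesis by (rule proj_trans[OF proj_trans[OF proj_sym[OF sq] gs]])
    qed
    ultimately show "G_fixed_pt a b q" unfolding G_fixed_pt_def by blast
  qed
qed
end
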